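(* Let $n\ge 2$. Then $\mathrm{Q}=\mathrm{A}\cap\mathrm{P}=\mathrm{B}\cap\mathrm{P}=\mathrm{A}\cap\mathrm{B}$. Moreover: <ul> <li>if $n\le 3$, then $\mathrm{Q}=\mathrm{P}=\mathrm{Z}^\times(\mathrm{C}^{\times(0)}\cup\mathrm{C}^{\times(1)})$;</li> <li>if $n=4$, then $\mathrm{Q}\ne\mathrm{P}$ and $\mathrm{A}\neq\mathrm{P}$.</li> </ul>
   Context: Let $\mathrm{C}$ be either the real Clifford algebra $C\ell_{p,q}$ with $p+q=n$, or the complex Clifford algebra $C\ell(\mathbb{C}^n)$. It has identity $e$ and generators $e_1,\dots,e_n$ satisfying $e_ae_b+e_be_a=2\eta_{ab}e$. In the real case $\eta=\mathrm{diag}(1,\dots,1,-1,\dots,-1)$ with $p$ entries $+1$ and $q$ entries $-1$. In the complex case $\eta=I_n$. $\mathrm{C}^k$ is the grade-$k$ subspace, spanned by the products $e_{a_1}\cdots e_{a_k}$ with $a_1<\dots<a_k$. The even subspace is $\mathrm{C}^{(0)}=\bigoplus_{k\text{ even}}\mathrm{C}^k$ and the odd subspace is $\mathrm{C}^{(1)}=\bigoplus_{k\text{ odd}}\mathrm{C}^k$. The grade involution $U\mapsto\hat U$ is the linear automorphism acting on $\mathrm{C}^k$ as $(-1)^k$. The reversion $U\mapsto\tilde U$ is the linear anti-automorphism acting on $\mathrm{C}^k$ as $(-1)^{k(k-1)/2}$. For $S\subseteq\mathrm{C}$, $S^\times$ is the set of elements of $S$ invertible in $\mathrm{C}$, and $\mathrm{C}^{\times(j)}:=(\mathrm{C}^{(j)})^\times$.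 $\mathrm{Z}$ is the center: $\mathrm{Z}=\mathrm{C}^0$ for $n$ even and $\mathrm{Z}=\mathrm{C}^0\oplus\mathrm{C}^n$ for $n$ odd. Define: <ul> <li>$\mathrm{P}:=\mathrm{Z}^\times(\mathrm{C}^{\times(0)}\cup\mathrm{C}^{\times(1)})=\{WT: W\in\mathrm{Z}^\times, T\in\mathrm{C}^{\times(0)}\cup\mathrm{C}^{\times(1)}\}$;</li> <li>$\mathrm{A}:=\{T\in\mathrm{C}^\times:\tilde TT\in\mathrm{Z}^\times\}$;</li> <li>$\mathrm{B}:=\{T\in\mathrm{C}^\times:\hat{\tilde T}T\in\mathrm{Z}^\times\}$;</li> <li>$\mathrm{Q}:=\{T\in\mathrm{P}:\tilde TT\in\mathrm{Z}^\times\}$.</li> </ul> *)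

theory Defs
  imports Complex_Main
begin

text \<open>
Clifford algebra over a field 'a with n generators e_0,...,e_{n-1} and diagonal
metric eta (e_i e_i = eta i).  An element is represented by its coefficient
function on blades: a blade e_A, A a subset of {0..<n}, stands for the ordered
product e_{a_1} ... e_{a_k}, a_1 < ... < a_k.
\<close>

type_synonym 'a clif = "nat set \<Rightarrow> 'a"

definition clif_carrier :: "nat \<Rightarrow> 'a::field clif set" where
  "clif_carrier n = {x. \<forall>A. \<not> A \<subseteq> {..<n} \<longrightarrow> x A = 0}"

text \<open>Coefficient of e_{A \<triangle> B} in the product e_A e_B.\<close>
definition blade_coeff :: "(nat \<Rightarrow> 'a::field) \<Rightarrow> nat set \<Rightarrow> nat set \<Rightarrow> 'a" where
  "blade_coeff eta A B =
     (-1) ^ card {(a, b). a \<in> A \<and> b \<in> B \<and> b < a} * (\<Prod>i\<in>A \<inter> B. eta i)"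

definition clif_mult :: "nat \<Rightarrow> (nat \<Rightarrow> 'a::field) \<Rightarrow> 'a clif \<Rightarrow> 'a clif \<Rightarrow> 'a clif" where
  "clif_mult n eta x y = (\<lambda>C. if C \<subseteq> {..<n} then
      (\<Sum>A\<in>Pow {..<n}. \<Sum>B\<in>Pow {..<n}.
         if (A - B) \<union> (B - A) = C then x A * y B * blade_coeff eta A B else 0)
    else 0)"

definition clif_one :: "'a::field clif" where
  "clif_one = (\<lambda>A. if A = {} then 1 else 0)"

definition clif_invertible :: "nat \<Rightarrow> (nat \<Rightarrow> 'a::field) \<Rightarrow> 'a clif \<Rightarrow> bool" where
  "clif_invertible n eta x \<longleftrightarrow> x \<in> clif_carrier n \<and>
     (\<exists>y \<in> clif_carrier n. clif_mult n eta x y = clif_one \<and> clif_mult n eta y x = clif_one)"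

definition clif_units :: "nat \<Rightarrow> (nat \<Rightarrow> 'a::field) \<Rightarrow> 'a clif set \<Rightarrow> 'a clif set" where
  "clif_units n eta S = {x \<in> S. clif_invertible n eta x}"

definition clif_hat :: "'a::field clif \<Rightarrow> 'a clif" where
  "clif_hat x = (\<lambda>A. (-1) ^ card A * x A)"

definition clif_rev :: "'a::field clif \<Rightarrow> 'a clif" where
  "clif_rev x = (\<lambda>A. (-1) ^ (card A * (card A - 1) div 2) * x A)"

definition clif_even :: "nat \<Rightarrow> 'a::field clif set" where
  "clif_even n = {x \<in> clif_carrier n. \<forall>A. x A \<noteq> 0 \<longrightarrow> even (card A)}"

definition clif_odd :: "nat \<Rightarrow> 'a::field clif set" where
  "clif_odd n = {x \<in> clif_carrier n. \<forall>A. x A \<noteq> 0 \<longrightarrow> odd (card A)}"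

definition clif_Z :: "nat \<Rightarrow> 'a::field clif set" where
  "clif_Z n = {x \<in> clif_carrier n. \<forall>A. x A \<noteq> 0 \<longrightarrow> A = {} \<or> (odd n \<and> A = {..<n})}"

definition clif_P :: "nat \<Rightarrow> (nat \<Rightarrow> 'a::field) \<Rightarrow> 'a clif set" where
  "clif_P n eta = {clif_mult n eta W T | W T.
      W \<in> clif_units n eta (clif_Z n) \<and>
      T \<in> clif_units n eta (clif_even n) \<union> clif_units n eta (clif_odd n)}"

definition clif_A :: "nat \<Rightarrow> (nat \<Rightarrow> 'a::field) \<Rightarrow> 'a clif set" where
  "clif_A n eta = {T \<in> clif_units n eta (clif_carrier n).
      clif_mult n eta (clif_rev T) T \<in> clif_units n eta (clif_Z n)}"

definition clif_B :: "nat \<Rightarrow> (nat \<Rightarrow> 'a::field) \<Rightarrow> 'a clif set" where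
  "clif_B n eta = {T \<in> clif_units n eta (clif_carrier n).
      clif_mult n eta (clif_hat (clif_rev T)) T \<in> clif_units n eta (clif_Z n)}"

definition clif_Q :: "nat \<Rightarrow> (nat \<Rightarrow> 'a::field) \<Rightarrow> 'a clif set" where
  "clif_Q n eta = {T \<in> clif_P n eta.
      clif_mult n eta (clif_rev T) T \<in> clif_units n eta (clif_Z n)}"

definition real_sig :: "nat \<Rightarrow> nat \<Rightarrow> real" where
  "real_sig p i = (if i < p then 1 else -1)"

end

theory Submission
  imports Defs "HOL-Library.Function_Algebras"
begin

definition ninv :: "nat set \<Rightarrow> nat set \<Rightarrow> nat" where
 "ninv A B = card {(a, b). a \<in> A \<and> b \<in> B \<and> b < a}"

lemma bc_eq: "blade_coeff eta A B = (-1)^ninv A B * (\<Prod>i\<in>A \<inter> B. eta i)"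
  by (simp add: blade_coeff_def ninv_def)

lemma ninv_fin: "finite A \<Longrightarrow> finite C \<Longrightarrow> finite {(a, b). a \<in> A \<and> b \<in> C \<and> b < a}"
  by (rule finite_subset[of _ "A \<times> C"]) auto

lemma ninv_un1: "finite A \<Longrightarrow> finite B \<Longrightarrow> finite C \<Longrightarrow> A \<inter> B = {} \<Longrightarrow>
   ninv (A \<union> B) C = ninv A C + ninv B C"
proof -
  assume f: "finite A" "finite B" "finite C" and d: "A \<inter> B = {}"
  have "{(a, b). a \<in> A \<union> B \<and> b \<in> C \<and> b < a} =
     {(a, b). a \<in> A \<and> b \<in> C \<and> b < a} \<union> {(a, b). a \<in> B \<and> b \<in> C \<and> b < a}" by auto
  moreover have "{(a, b). a \<in> A \<and> b \<in> C \<and> b < a} \<inter> {(a, b). a \<in> B \<and> b \<in> C \<and> b < a} = {}"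
    using d by auto
  ultimately show ?thesis unfolding ninv_def
    by (simp add: card_Un_disjoint ninv_fin f)
qed

lemma ninv_un2: "finite A \<Longrightarrow> finite B \<Longrightarrow> finite C \<Longrightarrow> A \<inter> B = {} \<Longrightarrow>
   ninv C (A \<union> B) = ninv C A + ninv C B"
proof -
  assume f: "finite A" "finite B" "finite C" and d: "A \<inter> B = {}"
  have "{(a, b). a \<in> C \<and> b \<in> A \<union> B \<and> b < a} =
     {(a, b). a \<in> C \<and> b \<in> A \<and> b < a} \<union> {(a, b). a \<in> C \<and> b \<in> B \<and> b < a}" by auto
  moreover have "{(a, b). a \<in> C \<and> b \<in> A \<and> b < a} \<inter> {(a, b). a \<in> C \<and> b \<in> B \<and> b < a} = {}"
    using d by auto
  ultimately show ?thesis unfolding ninv_def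
    by (simp add: card_Un_disjoint ninv_fin f)
qed

lemma ninv_sd1: "finite A \<Longrightarrow> finite B \<Longrightarrow> finite C \<Longrightarrow>
   ninv ((A - B) \<union> (B - A)) C + 2 * ninv (A \<inter> B) C = ninv A C + ninv B C"
proof -
  assume f: "finite A" "finite B" "finite C"
  have 1: "A = (A - B) \<union> (A \<inter> B)" "B = (B - A) \<union> (A \<inter> B)" by auto
  have "ninv A C = ninv (A - B) C + ninv (A \<inter> B) C"
    by (subst 1(1), rule ninv_un1) (use f in auto)
  moreover have "ninv B C = ninv (B - A) C + ninv (A \<inter> B) C"
    by (subst 1(2), rule ninv_un1) (use f in auto)
  moreover have "ninv ((A - B) \<union> (B - A)) C = ninv (A - B) C + ninv (B - A) C"
    by (rule ninv_un1) (use f in auto)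
  ultimately show ?thesis by simp
qed

lemma ninv_sd2: "finite A \<Longrightarrow> finite B \<Longrightarrow> finite C \<Longrightarrow>
   ninv C ((A - B) \<union> (B - A)) + 2 * ninv C (A \<inter> B) = ninv C A + ninv C B"
proof -
  assume f: "finite A" "finite B" "finite C"
  have 1: "A = (A - B) \<union> (A \<inter> B)" "B = (B - A) \<union> (A \<inter> B)" by auto
  have "ninv C A = ninv C (A - B) + ninv C (A \<inter> B)"
    by (subst 1(1), rule ninv_un2) (use f in auto)
  moreover have "ninv C B = ninv C (B - A) + ninv C (A \<inter> B)"
    by (subst 1(2), rule ninv_un2) (use f in auto)
  moreover have "ninv C ((A - B) \<union> (B - A)) = ninv C (A - B) + ninv C (B - A)"
    by (rule ninv_un2) (use f in auto)
  ultimately show ?thesis by simp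
qed

lemma m1_eq: "x + 2 * y = u + v \<Longrightarrow> (-1::'a::comm_ring_1)^x = (-1)^u * (-1)^v"
proof -
  assume h: "x + 2 * y = u + v"
  have "(-1::'a)^x = (-1)^x * ((-1)^2)^y" by simp
  also have "\<dots> = (-1)^(x + 2*y)" by (simp add: power_add power_mult)
  also have "\<dots> = (-1)^u * (-1)^v" by (simp add: h power_add)
  finally show ?thesis .
qed

lemma sg_sd1: "finite A \<Longrightarrow> finite B \<Longrightarrow> finite C \<Longrightarrow>
  (-1::'a::comm_ring_1)^ninv ((A - B) \<union> (B - A)) C = (-1)^ninv A C * (-1)^ninv B C"
  by (rule m1_eq, rule ninv_sd1)

lemma sg_sd2: "finite A \<Longrightarrow> finite B \<Longrightarrow> finite C \<Longrightarrow>
  (-1::'a::comm_ring_1)^ninv C ((A - B) \<union> (B - A)) = (-1)^ninv C A * (-1)^ninv C B"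
  by (rule m1_eq, rule ninv_sd2)

lemma ninv_swap: "finite A \<Longrightarrow> finite B \<Longrightarrow>
   ninv A B + ninv B A + card (A \<inter> B) = card A * card B"
proof -
  assume f: "finite A" "finite B"
  let ?X = "{(a, b). a \<in> A \<and> b \<in> B \<and> b < a}"
  let ?Y = "{(a, b). a \<in> A \<and> b \<in> B \<and> a < b}"
  let ?D = "{(a, b). a \<in> A \<and> b \<in> B \<and> a = b}"
  have u: "A \<times> B = ?X \<union> ?Y \<union> ?D" by auto
  have fX: "finite ?X" "finite ?Y" "finite ?D"
    by (rule finite_subset[of _ "A \<times> B"], auto simp: f)+
  have "card (A \<times> B) = card ?X + card ?Y + card ?D"
    unfolding u
    apply (subst card_Un_disjoint)
    using fX apply auto[3]
    apply (subst card_Un_disjoint)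
    using fX by auto
  moreover have "card ?Y = ninv B A"
    unfolding ninv_def
    by (rule bij_betw_same_card[of "\<lambda>(a,b). (b,a)"]) (auto simp: bij_betw_def inj_on_def image_def)
  moreover have "card ?D = card (A \<inter> B)"
    by (rule bij_betw_same_card[of "\<lambda>(a,b). a"]) (auto simp: bij_betw_def inj_on_def image_def)
  ultimately show ?thesis by (simp add: ninv_def card_cartesian_product)
qed


abbreviation sd :: "nat set \<Rightarrow> nat set \<Rightarrow> nat set" where
  "sd A B \<equiv> (A - B) \<union> (B - A)"

lemma ep_assoc:
  fixes eta :: "nat \<Rightarrow> 'a::comm_ring_1"
  assumes f: "finite X" "finite Y" "finite Z"
  shows "(\<Prod>i\<in>X \<inter> Y. eta i) * (\<Prod>i\<in>sd X Y \<inter> Z. eta i) =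
         (\<Prod>i\<in>Y \<inter> Z. eta i) * (\<Prod>i\<in>X \<inter> sd Y Z. eta i)"
proof -
  let ?U = "(X \<inter> Y) \<union> (X \<inter> Z) \<union> (Y \<inter> Z)"
  have "(\<Prod>i\<in>X \<inter> Y. eta i) * (\<Prod>i\<in>sd X Y \<inter> Z. eta i) = (\<Prod>i\<in>(X \<inter> Y) \<union> (sd X Y \<inter> Z). eta i)"
    by (rule prod.union_disjoint[symmetric]) (use f in auto)
  also have "(X \<inter> Y) \<union> (sd X Y \<inter> Z) = ?U" by blast
  finally have 1: "(\<Prod>i\<in>X \<inter> Y. eta i) * (\<Prod>i\<in>sd X Y \<inter> Z. eta i) = (\<Prod>i\<in>?U. eta i)" .
  have "(\<Prod>i\<in>Y \<inter> Z. eta i) * (\<Prod>i\<in>X \<inter> sd Y Z. eta i) = (\<Prod>i\<in>(Y \<inter> Z) \<union> (X \<inter> sd Y Z). eta i)"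
    by (rule prod.union_disjoint[symmetric]) (use f in auto)
  also have "(Y \<inter> Z) \<union> (X \<inter> sd Y Z) = ?U" by blast
  finally show ?thesis using 1 by simp
qed

lemma bc_assoc:
  fixes eta :: "nat \<Rightarrow> 'a::field"
  assumes f: "finite X" "finite Y" "finite Z"
  shows "blade_coeff eta X Y * blade_coeff eta (sd X Y) Z = blade_coeff eta Y Z * blade_coeff eta X (sd Y Z)"
proof -
  have s1: "(-1::'a)^ninv (sd X Y) Z = (-1)^ninv X Z * (-1)^ninv Y Z" by (rule sg_sd1) (use f in auto)
  have s2: "(-1::'a)^ninv X (sd Y Z) = (-1)^ninv X Y * (-1)^ninv X Z" by (rule sg_sd2) (use f in auto)
  have e: "(\<Prod>i\<in>X \<inter> Y. eta i) * (\<Prod>i\<in>sd X Y \<inter> Z. eta i) =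
         (\<Prod>i\<in>Y \<inter> Z. eta i) * (\<Prod>i\<in>X \<inter> sd Y Z. eta i)" by (rule ep_assoc[OF f])
  show ?thesis unfolding bc_eq s1 s2
  proof -
    let ?a = "(-1::'a)^ninv X Y" and ?b = "(-1::'a)^ninv X Z" and ?c = "(-1::'a)^ninv Y Z"
    have "?a * (\<Prod>i\<in>X \<inter> Y. eta i) * (?b * ?c * (\<Prod>i\<in>sd X Y \<inter> Z. eta i))
        = (?a * ?b * ?c) * ((\<Prod>i\<in>X \<inter> Y. eta i) * (\<Prod>i\<in>sd X Y \<inter> Z. eta i))" by (simp add: mult_ac)
    also have "\<dots> = (?a * ?b * ?c) * ((\<Prod>i\<in>Y \<inter> Z. eta i) * (\<Prod>i\<in>X \<inter> sd Y Z. eta i))" by (simp only: e)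
    also have "\<dots> = ?c * (\<Prod>i\<in>Y \<inter> Z. eta i) * (?a * ?b * (\<Prod>i\<in>X \<inter> sd Y Z. eta i))" by (simp add: mult_ac)
    finally show "?a * (\<Prod>i\<in>X \<inter> Y. eta i) * (?b * ?c * (\<Prod>i\<in>sd X Y \<inter> Z. eta i)) =
      ?c * (\<Prod>i\<in>Y \<inter> Z. eta i) * (?a * ?b * (\<Prod>i\<in>X \<inter> sd Y Z. eta i))" .
  qed
qed

lemma fin_sub: "A \<subseteq> {..<n::nat} \<Longrightarrow> finite A"
  by (meson finite_lessThan finite_subset)

lemma mult_formula:
  assumes "C \<subseteq> {..<n}"
  shows "clif_mult n eta x y C = (\<Sum>A\<in>Pow {..<n}. x A * y (sd A C) * blade_coeff eta A (sd A C))"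
proof -
  have "\<And>A. A \<in> Pow {..<n} \<Longrightarrow> (\<Sum>B\<in>Pow {..<n}. if sd A B = C then x A * y B * blade_coeff eta A B else 0)
      = x A * y (sd A C) * blade_coeff eta A (sd A C)"
  proof -
    fix A assume A: "A \<in> Pow {..<n}"
    have eq: "\<And>B. (sd A B = C) = (B = sd A C)" by blast
    have "sd A C \<in> Pow {..<n}" using A assms by auto
    then show "?thesis A" unfolding eq by (simp add: sum.delta')
  qed
  then show ?thesis using assms unfolding clif_mult_def by simp
qed

lemma mult_out: "\<not> C \<subseteq> {..<n} \<Longrightarrow> clif_mult n eta x y C = 0"
  by (simp add: clif_mult_def)

lemma sum_sd_reindex:
  assumes "A \<subseteq> {..<n}"
  shows "(\<Sum>B\<in>Pow {..<n}. f (sd A B)) = (\<Sum>B\<in>Pow {..<n}. (f B :: 'a::comm_monoid_add))"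
  by (rule sum.reindex_bij_witness[of _ "\<lambda>B. sd A B" "\<lambda>B. sd A B"]) (use assms in auto)

lemma mult_assoc:
  fixes eta :: "nat \<Rightarrow> 'a::field"
  shows "clif_mult n eta (clif_mult n eta x y) z = clif_mult n eta x (clif_mult n eta y z)"
proof
  fix D
  show "clif_mult n eta (clif_mult n eta x y) z D = clif_mult n eta x (clif_mult n eta y z) D"
  proof (cases "D \<subseteq> {..<n}")
    case False then show ?thesis by (simp add: mult_out)
  next
    case True
    let ?c = "blade_coeff eta"
    let ?P = "Pow {..<n}"
    have "clif_mult n eta (clif_mult n eta x y) z D =
       (\<Sum>B\<in>?P. (\<Sum>A\<in>?P. x A * y (sd A B) * ?c A (sd A B)) * z (sd B D) * ?c B (sd B D))"
      unfolding mult_formula[OF True] by (intro sum.cong refl) (simp add: mult_formula)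
    also have "\<dots> = (\<Sum>B\<in>?P. \<Sum>A\<in>?P. x A * y (sd A B) * z (sd B D) * (?c A (sd A B) * ?c B (sd B D)))"
      unfolding sum_distrib_right by (intro sum.cong refl) (simp add: mult_ac)
    also have "\<dots> = (\<Sum>A\<in>?P. \<Sum>B\<in>?P. x A * y (sd A B) * z (sd B D) * (?c A (sd A B) * ?c B (sd B D)))"
      by (rule sum.swap)
    also have "\<dots> = (\<Sum>A\<in>?P. \<Sum>B\<in>?P. x A * y (sd A B) * z (sd B D) * (?c (sd A B) (sd B D) * ?c A (sd A D)))"
    proof (intro sum.cong refl)
      fix A B assume A: "A \<in> ?P" and B: "B \<in> ?P"
      have fin: "finite A" "finite (sd A B)" "finite (sd B D)" using A B True by (auto intro: fin_sub)
      have "?c A (sd A B) * ?c (sd A (sd A B)) (sd B D) = ?c (sd A B) (sd B D) * ?c A (sd (sd A B) (sd B D))"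
        by (rule bc_assoc[OF fin])
      moreover have "sd A (sd A B) = B" "sd (sd A B) (sd B D) = sd A D" by blast+
      ultimately show "x A * y (sd A B) * z (sd B D) * (?c A (sd A B) * ?c B (sd B D)) =
          x A * y (sd A B) * z (sd B D) * (?c (sd A B) (sd B D) * ?c A (sd A D))" by simp
    qed
    also have "\<dots> = (\<Sum>A\<in>?P. x A * (\<Sum>B\<in>?P. y (sd A B) * z (sd (sd A B) (sd A D)) * ?c (sd A B) (sd (sd A B) (sd A D))) * ?c A (sd A D))"
    proof (intro sum.cong refl)
      fix A assume A: "A \<in> ?P"
      have "\<And>B. sd (sd A B) (sd A D) = sd B D" by blast
      then show "(\<Sum>B\<in>?P. x A * y (sd A B) * z (sd B D) * (?c (sd A B) (sd B D) * ?c A (sd A D))) =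
        x A * (\<Sum>B\<in>?P. y (sd A B) * z (sd (sd A B) (sd A D)) * ?c (sd A B) (sd (sd A B) (sd A D))) * ?c A (sd A D)"
        by (simp add: sum_distrib_left sum_distrib_right mult_ac)
    qed
    also have "\<dots> = (\<Sum>A\<in>?P. x A * (\<Sum>B\<in>?P. y B * z (sd B (sd A D)) * ?c B (sd B (sd A D))) * ?c A (sd A D))"
    proof (intro sum.cong refl)
      fix A assume A: "A \<in> ?P"
      show "x A * (\<Sum>B\<in>?P. y (sd A B) * z (sd (sd A B) (sd A D)) * ?c (sd A B) (sd (sd A B) (sd A D))) * ?c A (sd A D) =
         x A * (\<Sum>B\<in>?P. y B * z (sd B (sd A D)) * ?c B (sd B (sd A D))) * ?c A (sd A D)"
        using sum_sd_reindex[of A n "\<lambda>B. y B * z (sd B (sd A D)) * ?c B (sd B (sd A D))"] A by simp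
    qed
    also have "\<dots> = clif_mult n eta x (clif_mult n eta y z) D"
      unfolding mult_formula[OF True]
    proof (intro sum.cong refl)
      fix A assume A: "A \<in> ?P"
      have "sd A D \<subseteq> {..<n}" using A True by auto
      then show "x A * (\<Sum>B\<in>?P. y B * z (sd B (sd A D)) * ?c B (sd B (sd A D))) * ?c A (sd A D) =
          x A * clif_mult n eta y z (sd A D) * ?c A (sd A D)" by (simp add: mult_formula)
    qed
    finally show ?thesis .
  qed
qed


definition tri :: "nat \<Rightarrow> nat" where "tri m = m * (m - 1) div 2"

lemma tri_0[simp]: "tri 0 = 0" by (simp add: tri_def)

lemma tri_Suc: "tri (Suc m) = tri m + m"
proof -
  have "Suc m * (Suc m - 1) div 2 = m * (m - 1) div 2 + m" by (induction m) auto
  then show ?thesis unfolding tri_def .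
qed

lemma tri_add: "tri (x + y) = tri x + tri y + x * y"
  by (induction y) (simp_all add: tri_Suc)

lemma tri_2: "2 * tri k + k = k * k"
  by (induction k) (simp_all add: tri_Suc)

lemma m1_even: "even (x + y) \<Longrightarrow> (-1::'a::comm_ring_1)^x = (-1)^y"
proof -
  assume "even (x + y)"
  then obtain t where t: "x + y = 2 * t" by (rule evenE)
  have "(-1::'a)^x = (-1)^x * ((-1)^y * (-1)^y)" by (simp add: power_mult_distrib[symmetric])
  also have "\<dots> = (-1)^(x+y) * (-1)^y" by (simp add: power_add mult_ac)
  also have "\<dots> = (-1)^y" by (simp add: t power_mult)
  finally show ?thesis .
qed

lemma card_split: "finite A \<Longrightarrow> card A = card (A - B) + card (A \<inter> B)"
proof -
  assume f: "finite A"
  have "A = (A - B) \<union> (A \<inter> B)" by blast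
  then have "card A = card ((A - B) \<union> (A \<inter> B))" by simp
  also have "\<dots> = card (A - B) + card (A \<inter> B)"
    by (rule card_Un_disjoint) (use f in auto)
  finally show ?thesis .
qed

lemma card_sd: "finite A \<Longrightarrow> finite B \<Longrightarrow> card (sd A B) + 2 * card (A \<inter> B) = card A + card B"
proof -
  assume f: "finite A" "finite B"
  have 1: "card A = card (A - B) + card (A \<inter> B)" by (rule card_split[OF f(1)])
  have 2: "card B = card (B - A) + card (A \<inter> B)" using card_split[OF f(2), of A] by (simp add: Int_commute)
  have 3: "card (sd A B) = card (A - B) + card (B - A)"
    by (rule card_Un_disjoint) (use f in auto)
  show ?thesis using 1 2 3 by simp
qed

lemma rev_sign:
  fixes eta :: "nat \<Rightarrow> 'a::field"
  assumes f: "finite A" "finite B"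
  shows "(-1)^tri (card (sd A B)) * blade_coeff eta A B =
         (-1)^tri (card A) * (-1)^tri (card B) * blade_coeff eta B A"
proof -
  define k where "k = card (A \<inter> B)"
  define a where "a = card (A - B)"
  define b where "b = card (B - A)"
  have ca: "card A = k + a" unfolding k_def a_def using card_split[OF f(1), of B] by simp
  have cb: "card B = k + b" unfolding k_def b_def using card_split[OF f(2), of A] by (simp add: Int_commute)
  have cs: "card (sd A B) = a + b" unfolding a_def b_def
    by (rule card_Un_disjoint) (use f in auto)
  have sw: "ninv A B + ninv B A + k = (k + a) * (k + b)" using ninv_swap[OF f] ca cb k_def by simp
  have t2: "2 * tri k + k = k * k" by (rule tri_2)
  have e1: "(k + a) * (k + b) = k * k + (k * a + (k * b + a * b))" by (simp add: algebra_simps)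
  have "tri (a + b) + ninv A B + (tri (k + a) + tri (k + b) + ninv B A) + k
      = 2 * (tri a + tri b + a * b + 2 * tri k + k * a + k * b) + k"
    using sw t2 e1 unfolding tri_add by (simp add: algebra_simps)
  then have ev: "even (tri (a + b) + ninv A B + (tri (k + a) + tri (k + b) + ninv B A))"
    by (metis add_right_cancel dvd_triv_left)
  have "(-1::'a)^(tri (a + b) + ninv A B) = (-1)^(tri (k + a) + tri (k + b) + ninv B A)"
    by (rule m1_even[OF ev])
  then have "(-1::'a)^tri (a + b) * (-1)^ninv A B = (-1)^tri (k + a) * (-1)^tri (k + b) * (-1)^ninv B A"
    by (simp add: power_add)
  then show ?thesis unfolding bc_eq ca cb cs by (simp add: Int_commute mult_ac)
qed

lemma hat_sign:
  assumes f: "finite A" "finite B"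
  shows "(-1::'a::comm_ring_1)^card (sd A B) = (-1)^card A * (-1)^card B"
  by (rule m1_eq, rule card_sd[OF f])


definition sc :: "'a::field \<Rightarrow> 'a clif \<Rightarrow> 'a clif" where
  "sc k x = (\<lambda>A. k * x A)"

lemma rev_eq: "clif_rev x = (\<lambda>A. (-1)^tri (card A) * x A)"
  by (simp add: clif_rev_def tri_def)

lemma ninv_empty1[simp]: "ninv {} C = 0" and ninv_empty2[simp]: "ninv C {} = 0"
  by (simp_all add: ninv_def)

lemma bc_empty1[simp]: "blade_coeff eta {} C = 1" and bc_empty2[simp]: "blade_coeff eta C {} = 1"
  by (simp_all add: bc_eq)

lemma car_iff: "x \<in> clif_carrier n \<longleftrightarrow> (\<forall>A. \<not> A \<subseteq> {..<n} \<longrightarrow> x A = 0)"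
  by (simp add: clif_carrier_def)

lemma car_mult[simp]: "clif_mult n eta x y \<in> clif_carrier n"
  by (simp add: car_iff mult_out)

lemma car_add[simp]: "x \<in> clif_carrier n \<Longrightarrow> y \<in> clif_carrier n \<Longrightarrow> x + y \<in> clif_carrier n"
  by (simp add: car_iff)
lemma car_diff[simp]: "x \<in> clif_carrier n \<Longrightarrow> y \<in> clif_carrier n \<Longrightarrow> x - y \<in> clif_carrier n"
  by (simp add: car_iff)
lemma car_neg[simp]: "x \<in> clif_carrier n \<Longrightarrow> - x \<in> clif_carrier n"
  by (simp add: car_iff)
lemma car_sc[simp]: "x \<in> clif_carrier n \<Longrightarrow> sc k x \<in> clif_carrier n"
  by (simp add: car_iff sc_def)
lemma car_zero[simp]: "(0::'a::field clif) \<in> clif_carrier n"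
  by (simp add: car_iff)
lemma car_one[simp]: "(clif_one::'a::field clif) \<in> clif_carrier n"
  by (simp add: car_iff clif_one_def)
lemma car_rev[simp]: "x \<in> clif_carrier n \<Longrightarrow> clif_rev x \<in> clif_carrier n"
  by (simp add: car_iff clif_rev_def)
lemma car_hat[simp]: "x \<in> clif_carrier n \<Longrightarrow> clif_hat x \<in> clif_carrier n"
  by (simp add: car_iff clif_hat_def)

lemma mult_addL: "clif_mult n eta (x + y) z = clif_mult n eta x z + clif_mult n eta y z"
proof
  fix C show "clif_mult n eta (x + y) z C = (clif_mult n eta x z + clif_mult n eta y z) C"
    by (cases "C \<subseteq> {..<n}") (simp_all add: mult_formula mult_out algebra_simps sum.distrib)
qed
lemma mult_addR: "clif_mult n eta z (x + y) = clif_mult n eta z x + clif_mult n eta z y"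
proof
  fix C show "clif_mult n eta z (x + y) C = (clif_mult n eta z x + clif_mult n eta z y) C"
    by (cases "C \<subseteq> {..<n}") (simp_all add: mult_formula mult_out algebra_simps sum.distrib)
qed
lemma mult_diffL: "clif_mult n eta (x - y) z = clif_mult n eta x z - clif_mult n eta y z"
proof
  fix C show "clif_mult n eta (x - y) z C = (clif_mult n eta x z - clif_mult n eta y z) C"
    by (cases "C \<subseteq> {..<n}") (simp_all add: mult_formula mult_out algebra_simps sum_subtractf)
qed
lemma mult_diffR: "clif_mult n eta z (x - y) = clif_mult n eta z x - clif_mult n eta z y"
proof
  fix C show "clif_mult n eta z (x - y) C = (clif_mult n eta z x - clif_mult n eta z y) C"
    by (cases "C \<subseteq> {..<n}") (simp_all add: mult_formula mult_out algebra_simps sum_subtractf)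
qed
lemma mult_scL: "clif_mult n eta (sc k x) y = sc k (clif_mult n eta x y)"
proof
  fix C show "clif_mult n eta (sc k x) y C = sc k (clif_mult n eta x y) C"
    by (cases "C \<subseteq> {..<n}") (simp_all add: mult_formula mult_out sc_def algebra_simps sum_distrib_left)
qed
lemma mult_scR: "clif_mult n eta x (sc k y) = sc k (clif_mult n eta x y)"
proof
  fix C show "clif_mult n eta x (sc k y) C = sc k (clif_mult n eta x y) C"
    by (cases "C \<subseteq> {..<n}") (simp_all add: mult_formula mult_out sc_def algebra_simps sum_distrib_left)
qed
lemma mult_negL: "clif_mult n eta (- x) y = - clif_mult n eta x y"
proof
  fix C show "clif_mult n eta (- x) y C = (- clif_mult n eta x y) C"
    by (cases "C \<subseteq> {..<n}") (simp_all add: mult_formula mult_out sum_negf)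
qed
lemma mult_negR: "clif_mult n eta x (- y) = - clif_mult n eta x y"
proof
  fix C show "clif_mult n eta x (- y) C = (- clif_mult n eta x y) C"
    by (cases "C \<subseteq> {..<n}") (simp_all add: mult_formula mult_out sum_negf)
qed
lemma mult_0L[simp]: "clif_mult n eta 0 y = 0"
  by (rule ext) (simp add: clif_mult_def cong: if_cong)
lemma mult_0R[simp]: "clif_mult n eta x 0 = 0"
  by (rule ext) (simp add: clif_mult_def cong: if_cong)

lemma one_mult: "x \<in> clif_carrier n \<Longrightarrow> clif_mult n eta clif_one x = x"
proof
  fix C assume x: "x \<in> clif_carrier n"
  show "clif_mult n eta clif_one x C = x C"
  proof (cases "C \<subseteq> {..<n}")
    case True
    have "clif_mult n eta clif_one x C =
        (\<Sum>A\<in>Pow {..<n}. if A = {} then x (sd A C) * blade_coeff eta A (sd A C) else 0)"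
      unfolding mult_formula[OF True] by (intro sum.cong refl) (simp add: clif_one_def)
    also have "\<dots> = x C" by (subst sum.delta) auto
    finally show ?thesis .
  qed (use x in \<open>simp_all add: mult_out car_iff\<close>)
qed

lemma mult_one: "x \<in> clif_carrier n \<Longrightarrow> clif_mult n eta x clif_one = x"
proof
  fix C assume x: "x \<in> clif_carrier n"
  show "clif_mult n eta x clif_one C = x C"
  proof (cases "C \<subseteq> {..<n}")
    case True
    have e: "\<And>A. x A * clif_one (sd A C) * blade_coeff eta A (sd A C) = (if A = C then x A * blade_coeff eta A (sd A C) else 0)"
    proof -
      fix A show "?thesis A"
      proof (cases "A = C")
        case False
        then have "sd A C \<noteq> {}" by blast
        then have "clif_one (sd A C) = (0::'a)" unfolding clif_one_def by (rule if_not_P)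
        then show ?thesis using False by simp
      qed (simp add: clif_one_def)
    qed
    have "clif_mult n eta x clif_one C =
        (\<Sum>A\<in>Pow {..<n}. if A = C then x A * blade_coeff eta A (sd A C) else 0)"
      unfolding mult_formula[OF True] e ..
    also have "\<dots> = x C" using True by (subst sum.delta) auto
    finally show ?thesis .
  qed (use x in \<open>simp_all add: mult_out car_iff\<close>)
qed

lemma rev_mult: "clif_rev (clif_mult n (eta::nat \<Rightarrow> 'a::field) x y) = clif_mult n eta (clif_rev y) (clif_rev x)"
proof
  fix C
  show "clif_rev (clif_mult n eta x y) C = clif_mult n eta (clif_rev y) (clif_rev x) C"
  proof (cases "C \<subseteq> {..<n}")
    case True
    let ?c = "blade_coeff eta"
    have "clif_mult n eta (clif_rev y) (clif_rev x) C =
       (\<Sum>B\<in>Pow {..<n}. (-1)^tri (card B) * y B * ((-1)^tri (card (sd B C)) * x (sd B C)) * ?c B (sd B C))"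
      unfolding mult_formula[OF True] rev_eq by simp
    also have "\<dots> = (\<Sum>A\<in>Pow {..<n}. (-1)^tri (card (sd C A)) * y (sd C A) * ((-1)^tri (card (sd (sd C A) C)) * x (sd (sd C A) C)) * ?c (sd C A) (sd (sd C A) C))"
      using sum_sd_reindex[OF True, of "\<lambda>B. (-1)^tri (card B) * y B * ((-1)^tri (card (sd B C)) * x (sd B C)) * ?c B (sd B C)"]
      by simp
    also have "\<dots> = (\<Sum>A\<in>Pow {..<n}. (-1)^tri (card C) * (x A * y (sd A C) * ?c A (sd A C)))"
    proof (intro sum.cong refl)
      fix A assume A: "A \<in> Pow {..<n}"
      have s1: "sd (sd C A) C = A" "sd C A = sd A C" "sd A (sd A C) = C" "sd (sd A C) C = A" by blast+
      have fin: "finite A" "finite (sd A C)" using A True by (auto intro: fin_sub)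
      have "(-1)^tri (card (sd A (sd A C))) * ?c A (sd A C) = (-1)^tri (card A) * (-1)^tri (card (sd A C)) * ?c (sd A C) A"
        by (rule rev_sign[OF fin])
      then have key: "(-1)^tri (card C) * ?c A (sd A C) = (-1)^tri (card A) * (-1)^tri (card (sd A C)) * ?c (sd A C) A"
        by (simp only: s1)
      have "(-1)^tri (card C) * (x A * y (sd A C) * ?c A (sd A C)) = x A * y (sd A C) * ((-1)^tri (card C) * ?c A (sd A C))"
        by (simp add: mult_ac)
      also have "\<dots> = x A * y (sd A C) * ((-1)^tri (card A) * (-1)^tri (card (sd A C)) * ?c (sd A C) A)"
        by (simp only: key)
      also have "\<dots> = (-1)^tri (card (sd C A)) * y (sd C A) * ((-1)^tri (card (sd (sd C A) C)) * x (sd (sd C A) C)) * ?c (sd C A) (sd (sd C A) C)"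
        unfolding s1(1) s1(2) s1(4) by (simp add: mult_ac)
      finally show "(-1)^tri (card (sd C A)) * y (sd C A) * ((-1)^tri (card (sd (sd C A) C)) * x (sd (sd C A) C)) * ?c (sd C A) (sd (sd C A) C) =
          (-1)^tri (card C) * (x A * y (sd A C) * ?c A (sd A C))" by simp
    qed
    also have "\<dots> = clif_rev (clif_mult n eta x y) C"
      unfolding rev_eq mult_formula[OF True] by (simp add: sum_distrib_left)
    finally show ?thesis ..
  qed (simp add: mult_out rev_eq)
qed

lemma hat_mult: "clif_hat (clif_mult n (eta::nat \<Rightarrow> 'a::field) x y) = clif_mult n eta (clif_hat x) (clif_hat y)"
proof
  fix C
  show "clif_hat (clif_mult n eta x y) C = clif_mult n eta (clif_hat x) (clif_hat y) C"
  proof (cases "C \<subseteq> {..<n}")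
    case True
    show ?thesis unfolding clif_hat_def mult_formula[OF True] sum_distrib_left
    proof (intro sum.cong refl)
      fix A assume A: "A \<in> Pow {..<n}"
      have fin: "finite A" "finite (sd A C)" using A True by (auto intro: fin_sub)
      have "(-1::'a)^card (sd A (sd A C)) = (-1)^card A * (-1)^card (sd A C)" by (rule hat_sign[OF fin])
      moreover have "sd A (sd A C) = C" by blast
      ultimately show "(-1)^card C * (x A * y (sd A C) * blade_coeff eta A (sd A C)) =
         (-1)^card A * x A * ((-1)^card (sd A C) * y (sd A C)) * blade_coeff eta A (sd A C)"
        by (simp add: mult_ac)
    qed
  qed (simp add: mult_out clif_hat_def)
qed

lemma rev_rev[simp]: "clif_rev (clif_rev x) = x"
  by (rule ext) (simp add: rev_eq power_mult_distrib[symmetric])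
lemma hat_hat[simp]: "clif_hat (clif_hat x) = x"
  by (rule ext) (simp add: clif_hat_def power_mult_distrib[symmetric])
lemma hat_rev: "clif_hat (clif_rev x) = clif_rev (clif_hat x)"
  by (rule ext) (simp add: rev_eq clif_hat_def)
lemma rev_add: "clif_rev (x + y) = clif_rev x + clif_rev y"
  by (rule ext) (simp add: rev_eq algebra_simps)
lemma rev_diff: "clif_rev (x - y) = clif_rev x - clif_rev y"
  by (rule ext) (simp add: rev_eq algebra_simps)
lemma rev_neg: "clif_rev (- x) = - clif_rev x"
  by (rule ext) (simp add: rev_eq algebra_simps)
lemma rev_sc: "clif_rev (sc k x) = sc k (clif_rev x)"
  by (rule ext) (simp add: rev_eq sc_def algebra_simps)
lemma hat_add: "clif_hat (x + y) = clif_hat x + clif_hat y"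
  by (rule ext) (simp add: clif_hat_def algebra_simps)
lemma hat_diff: "clif_hat (x - y) = clif_hat x - clif_hat y"
  by (rule ext) (simp add: clif_hat_def algebra_simps)
lemma hat_neg: "clif_hat (- x) = - clif_hat x"
  by (rule ext) (simp add: clif_hat_def algebra_simps)
lemma hat_sc: "clif_hat (sc k x) = sc k (clif_hat x)"
  by (rule ext) (simp add: clif_hat_def sc_def algebra_simps)
lemma rev_one[simp]: "clif_rev clif_one = clif_one"
  by (rule ext) (simp add: rev_eq clif_one_def tri_def)
lemma hat_one[simp]: "clif_hat clif_one = clif_one"
  by (rule ext) (simp add: clif_hat_def clif_one_def)
lemma rev_0[simp]: "clif_rev 0 = 0" and hat_0[simp]: "clif_hat 0 = 0"
  by (rule ext, simp add: rev_eq clif_hat_def)+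


lemma neg_self: "(- c = (c::'a::field_char_0)) = (c = 0)"
proof
  assume h: "- c = c"
  have "2 * c = c - (- c)" by (simp add: algebra_simps mult_2)
  also have "\<dots> = 0" by (simp only: h diff_self)
  finally show "c = 0" by simp
qed simp

definition pI :: "nat \<Rightarrow> 'a::field clif" where "pI n = (\<lambda>A. if A = {..<n} then 1 else 0)"
definition zc :: "nat \<Rightarrow> 'a::field \<Rightarrow> 'a \<Rightarrow> 'a clif" where
  "zc n a b = (\<lambda>A. if A = {} then a else if A = {..<n} then b else 0)"
definition ev :: "'a::field clif \<Rightarrow> 'a clif" where "ev x = (\<lambda>A. if even (card A) then x A else 0)"
definition od :: "'a::field clif \<Rightarrow> 'a clif" where "od x = (\<lambda>A. if odd (card A) then x A else 0)"

lemma sc_sc: "sc k (sc m x) = sc (k * m) x" by (simp add: sc_def fun_eq_iff)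
lemma sc_1[simp]: "sc 1 x = x" by (simp add: sc_def)
lemma sc_0[simp]: "sc 0 x = 0" by (simp add: sc_def fun_eq_iff)
lemma sc_zero[simp]: "sc k 0 = 0" by (simp add: sc_def fun_eq_iff)
lemma sc_add: "sc k (x + y) = sc k x + sc k y" by (simp add: sc_def fun_eq_iff algebra_simps)
lemma sc_diff: "sc k (x - y) = sc k x - sc k y" by (simp add: sc_def fun_eq_iff algebra_simps)
lemma sc_neg: "sc (-1) x = - x" by (simp add: sc_def fun_eq_iff)
lemma sc_app: "sc k x A = k * x A" by (simp add: sc_def)

lemma ev_od: "x = ev x + od x" by (simp add: ev_def od_def fun_eq_iff)
lemma hat_ev: "clif_hat (ev x) = ev x" by (simp add: ev_def clif_hat_def fun_eq_iff)
lemma hat_od: "clif_hat (od x) = - od x" by (simp add: od_def clif_hat_def fun_eq_iff)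
lemma car_ev[simp]: "x \<in> clif_carrier n \<Longrightarrow> ev x \<in> clif_carrier n" by (simp add: ev_def car_iff)
lemma car_od[simp]: "x \<in> clif_carrier n \<Longrightarrow> od x \<in> clif_carrier n" by (simp add: od_def car_iff)
lemma car_pI[simp]: "pI n \<in> clif_carrier n" by (simp add: pI_def car_iff)
lemma car_zc[simp]: "zc n a b \<in> clif_carrier n" by (simp add: zc_def car_iff)

lemma even_iff: "x \<in> clif_even n \<longleftrightarrow> x \<in> clif_carrier n \<and> clif_hat x = (x::'a::field_char_0 clif)"
proof -
  have "(\<forall>A. x A \<noteq> 0 \<longrightarrow> even (card A)) \<longleftrightarrow> (\<forall>A. (-1)^card A * x A = x A)"
  proof (intro iffI allI)
    fix A assume "\<forall>A. x A \<noteq> 0 \<longrightarrow> even (card A)"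
    then show "(-1)^card A * x A = x A" by (cases "x A = 0") auto
  next
    fix A assume h: "\<forall>A. (-1)^card A * x A = x A"
    show "x A \<noteq> 0 \<longrightarrow> even (card A)" using h[rule_format, of A] by (auto simp: neg_self minus_one_power_iff split: if_splits)
  qed
  then show ?thesis by (simp add: clif_even_def clif_hat_def fun_eq_iff)
qed

lemma odd_iff: "x \<in> clif_odd n \<longleftrightarrow> x \<in> clif_carrier n \<and> clif_hat x = - (x::'a::field_char_0 clif)"
proof -
  have "(\<forall>A. x A \<noteq> 0 \<longrightarrow> odd (card A)) \<longleftrightarrow> (\<forall>A. (-1)^card A * x A = - x A)"
  proof (intro iffI allI)
    fix A assume "\<forall>A. x A \<noteq> 0 \<longrightarrow> odd (card A)"
    then show "(-1)^card A * x A = - x A" by (cases "x A = 0") auto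
  next
    fix A assume h: "\<forall>A. (-1)^card A * x A = - x A"
    show "x A \<noteq> 0 \<longrightarrow> odd (card A)" using h[rule_format, of A] by (auto simp: neg_self minus_one_power_iff split: if_splits)
  qed
  then show ?thesis by (simp add: clif_odd_def clif_hat_def fun_eq_iff)
qed

lemma par_sep: "clif_hat u = u \<Longrightarrow> clif_hat u = - u \<Longrightarrow> u = (0::'a::field_char_0 clif)"
  by (simp add: fun_eq_iff neg_self)

locale clif =
  fixes n :: nat and eta :: "nat \<Rightarrow> 'a::field_char_0"
  assumes eta_pm: "eta i = 1 \<or> eta i = -1"
  and n_pos: "1 \<le> n"
begin

abbreviation mul where "mul \<equiv> clif_mult n eta"
abbreviation car where "car \<equiv> clif_carrier n"
abbreviation invb where "invb \<equiv> clif_invertible n eta"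
abbreviation one1 where "one1 \<equiv> (clif_one :: 'a clif)"
abbreviation II where "II \<equiv> (pI n :: 'a clif)"
abbreviation rv where "rv \<equiv> (clif_rev :: 'a clif \<Rightarrow> 'a clif)"
abbreviation ht where "ht \<equiv> (clif_hat :: 'a clif \<Rightarrow> 'a clif)"

definition s :: 'a where "s = blade_coeff eta {..<n} {..<n}"
definition cinv :: "'a clif \<Rightarrow> 'a clif" where
  "cinv x = (SOME y. y \<in> car \<and> mul x y = one1 \<and> mul y x = one1)"

lemma n_ne: "{..<n} \<noteq> {}" using n_pos lessThan_empty_iff[of n] by simp

lemma one_ne_0: "one1 \<noteq> 0"
proof
  assume "one1 = 0" then have "one1 {} = (0::'a clif) {}" by simp
  then show False by (simp add: clif_one_def)
qed

lemma cinv: "invb x \<Longrightarrow> cinv x \<in> car \<and> mul x (cinv x) = one1 \<and> mul (cinv x) x = one1"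
proof -
  assume "invb x" then obtain y where y: "y \<in> car \<and> mul x y = one1 \<and> mul y x = one1"
    unfolding clif_invertible_def by blast
  show ?thesis unfolding cinv_def by (rule someI[of "\<lambda>y. y \<in> car \<and> mul x y = one1 \<and> mul y x = one1", OF y])
qed

lemma invb_car: "invb x \<Longrightarrow> x \<in> car" by (simp add: clif_invertible_def)

lemma invbI: "x \<in> car \<Longrightarrow> y \<in> car \<Longrightarrow> mul x y = one1 \<Longrightarrow> mul y x = one1 \<Longrightarrow> invb x"
  unfolding clif_invertible_def by blast

lemma inv_unique: "invb x \<Longrightarrow> y \<in> car \<Longrightarrow> mul x y = one1 \<Longrightarrow> y = cinv x"
proof -
  assume x: "invb x" and y: "y \<in> car" and e: "mul x y = one1"
  have "cinv x = mul (cinv x) (mul x y)" using cinv[OF x] by (simp add: e mult_one)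
  also have "\<dots> = mul (mul (cinv x) x) y" by (simp add: mult_assoc)
  also have "\<dots> = y" using cinv[OF x] y by (simp add: one_mult)
  finally show ?thesis by simp
qed

lemma invb_one: "invb one1"
  by (rule invbI[of _ one1]) (simp_all add: one_mult)

lemma not_invb_0: "\<not> invb 0"
proof
  assume "invb 0" then have "mul 0 (cinv 0) = one1" using cinv by blast
  then show False using one_ne_0 by simp
qed

lemma invb_mult: "invb x \<Longrightarrow> invb y \<Longrightarrow> invb (mul x y)"
proof -
  assume x: "invb x" and y: "invb y"
  note cx = cinv[OF x] and cy = cinv[OF y]
  show ?thesis
  proof (rule invbI[of _ "mul (cinv y) (cinv x)"])
    have "mul (mul x y) (mul (cinv y) (cinv x)) = mul x (mul (mul y (cinv y)) (cinv x))" by (simp add: mult_assoc)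
    then show "mul (mul x y) (mul (cinv y) (cinv x)) = one1" using cx cy by (simp add: one_mult)
    have "mul (mul (cinv y) (cinv x)) (mul x y) = mul (cinv y) (mul (mul (cinv x) x) y)" by (simp add: mult_assoc)
    then show "mul (mul (cinv y) (cinv x)) (mul x y) = one1" using cx cy invb_car[OF y] by (simp add: one_mult)
  qed simp_all
qed

lemma invb_rev: "invb x \<Longrightarrow> invb (rv x)"
proof -
  assume x: "invb x"
  note cx = cinv[OF x]
  show ?thesis
  proof (rule invbI[of _ "rv (cinv x)"])
    show "mul (rv x) (rv (cinv x)) = one1" using cx by (simp add: rev_mult[symmetric])
    show "mul (rv (cinv x)) (rv x) = one1" using cx by (simp add: rev_mult[symmetric])
  qed (use cx invb_car[OF x] in simp_all)
qed

lemma invb_hat: "invb x \<Longrightarrow> invb (ht x)"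
proof -
  assume x: "invb x"
  note cx = cinv[OF x]
  show ?thesis
  proof (rule invbI[of _ "ht (cinv x)"])
    show "mul (ht x) (ht (cinv x)) = one1" using cx by (simp add: hat_mult[symmetric])
    show "mul (ht (cinv x)) (ht x) = one1" using cx by (simp add: hat_mult[symmetric])
  qed (use cx invb_car[OF x] in simp_all)
qed

lemma invb_sc: "k \<noteq> 0 \<Longrightarrow> invb x \<Longrightarrow> invb (sc k x)"
proof -
  assume k: "k \<noteq> 0" and x: "invb x"
  note cx = cinv[OF x]
  show ?thesis
  proof (rule invbI[of _ "sc (1/k) (cinv x)"])
    show "mul (sc k x) (sc (1/k) (cinv x)) = one1" using cx k by (simp add: mult_scL mult_scR sc_sc)
    show "mul (sc (1/k) (cinv x)) (sc k x) = one1" using cx k by (simp add: mult_scL mult_scR sc_sc)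
  qed (use cx invb_car[OF x] in simp_all)
qed

lemma invb_cinv: "invb x \<Longrightarrow> invb (cinv x)"
  using cinv invb_car by (intro invbI[of _ x]) auto

lemma cancelR: "invb T \<Longrightarrow> X \<in> car \<Longrightarrow> mul X T = Y \<Longrightarrow> X = mul Y (cinv T)"
proof -
  assume T: "invb T" and X: "X \<in> car" and e: "mul X T = Y"
  have "mul Y (cinv T) = mul X (mul T (cinv T))" by (simp add: e[symmetric] mult_assoc)
  then show ?thesis using cinv[OF T] X by (simp add: mult_one)
qed

lemma cancelL: "invb T \<Longrightarrow> X \<in> car \<Longrightarrow> mul T X = Y \<Longrightarrow> X = mul (cinv T) Y"
proof -
  assume T: "invb T" and X: "X \<in> car" and e: "mul T X = Y"
  have "mul (cinv T) Y = mul (mul (cinv T) T) X" by (simp add: e[symmetric] mult_assoc)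
  then show ?thesis using cinv[OF T] X by (simp add: one_mult)
qed

lemma cinv_hat: "invb x \<Longrightarrow> cinv (ht x) = ht (cinv x)"
proof -
  assume x: "invb x"
  have "mul (ht x) (ht (cinv x)) = one1" using cinv[OF x] by (simp add: hat_mult[symmetric])
  moreover have "ht (cinv x) \<in> car" using cinv[OF x] by simp
  ultimately show ?thesis using inv_unique[OF invb_hat[OF x]] by simp
qed

lemma even_cinv: "invb x \<Longrightarrow> x \<in> clif_even n \<Longrightarrow> cinv x \<in> clif_even n"
proof -
  assume x: "invb x" and e: "x \<in> clif_even n"
  have "ht x = x" using e even_iff by blast
  then have "ht (cinv x) = cinv x" using cinv_hat[OF x] by simp
  then show ?thesis using cinv[OF x] even_iff by blast
qed

lemma odd_cinv: "invb x \<Longrightarrow> x \<in> clif_odd n \<Longrightarrow> cinv x \<in> clif_odd n"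
proof -
  assume x: "invb x" and o: "x \<in> clif_odd n"
  have h: "ht x = - x" using o odd_iff by blast
  have "cinv (- x) = - cinv x"
  proof -
    have "invb (- x)" using invb_sc[OF _ x, of "-1"] by (simp add: sc_neg)
    moreover have "mul (- x) (- cinv x) = one1" using cinv[OF x] by (simp add: mult_negL mult_negR)
    moreover have "- cinv x \<in> car" using cinv[OF x] by simp
    ultimately show ?thesis using inv_unique by simp
  qed
  then have "ht (cinv x) = - cinv x" using cinv_hat[OF x] h by simp
  then show ?thesis using cinv[OF x] odd_iff by blast
qed

end


context clif
begin

lemma mul_I_left: "C \<subseteq> {..<n} \<Longrightarrow> mul II x C = x (sd {..<n} C) * blade_coeff eta {..<n} (sd {..<n} C)"
proof -
  assume C: "C \<subseteq> {..<n}"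
  have "mul II x C = (\<Sum>A\<in>Pow {..<n}. if A = {..<n} then x (sd A C) * blade_coeff eta A (sd A C) else 0)"
    unfolding mult_formula[OF C] by (intro sum.cong refl) (simp add: pI_def)
  also have "\<dots> = x (sd {..<n} C) * blade_coeff eta {..<n} (sd {..<n} C)" by (subst sum.delta) auto
  finally show ?thesis .
qed

lemma mul_I_right: "C \<subseteq> {..<n} \<Longrightarrow> mul x II C = x (sd {..<n} C) * blade_coeff eta (sd {..<n} C) {..<n}"
proof -
  assume C: "C \<subseteq> {..<n}"
  have e: "\<And>A. x A * pI n (sd A C) * blade_coeff eta A (sd A C) =
     (if A = sd {..<n} C then x A * blade_coeff eta A {..<n} else 0)"
  proof -
    fix A show "?thesis A"
    proof (cases "A = sd {..<n} C")
      case True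
      then have "sd A C = {..<n}" using C by blast
      then show ?thesis using True by (simp add: pI_def)
    next
      case False
      then have "sd A C \<noteq> {..<n}" by blast
      then have "pI n (sd A C) = (0::'a)" unfolding pI_def by (rule if_not_P)
      then show ?thesis using False by simp
    qed
  qed
  have "mul x II C = (\<Sum>A\<in>Pow {..<n}. if A = sd {..<n} C then x A * blade_coeff eta A {..<n} else 0)"
    unfolding mult_formula[OF C] e ..
  also have "\<dots> = x (sd {..<n} C) * blade_coeff eta (sd {..<n} C) {..<n}" using C by (subst sum.delta) auto
  finally show ?thesis .
qed

lemma bc_I_comm: "odd n \<Longrightarrow> B \<subseteq> {..<n} \<Longrightarrow> blade_coeff eta {..<n} B = blade_coeff eta B {..<n}"
proof -
  assume o: "odd n" and B: "B \<subseteq> {..<n}"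
  have fin: "finite {..<n}" "finite B" using B by (auto intro: fin_sub)
  have i: "{..<n} \<inter> B = B" "B \<inter> {..<n} = B" using B by auto
  have sw: "ninv {..<n} B + ninv B {..<n} + card B = n * card B" using ninv_swap[OF fin] i by simp
  obtain m where m: "n = 2 * m + 1" using o oddE by blast
  have "ninv {..<n} B + ninv B {..<n} = 2 * (m * card B)" using sw unfolding m by (simp add: algebra_simps)
  then have "even (ninv {..<n} B + ninv B {..<n})" by simp
  then have "(-1::'a)^ninv {..<n} B = (-1)^ninv B {..<n}" by (rule m1_even)
  then show ?thesis unfolding bc_eq i by simp
qed

lemma I_central: "odd n \<Longrightarrow> mul II x = mul x II"
proof
  fix C assume o: "odd n"
  show "mul II x C = mul x II C"
  proof (cases "C \<subseteq> {..<n}")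
    case True
    have "sd {..<n} C \<subseteq> {..<n}" using True by blast
    then show ?thesis using True by (simp add: mul_I_left mul_I_right bc_I_comm[OF o])
  qed (simp add: mult_out)
qed

lemma I_sq: "mul II II = sc s one1"
proof
  fix C show "mul II II C = sc s one1 C"
  proof (cases "C \<subseteq> {..<n}")
    case True
    show ?thesis
    proof (cases "C = {}")
      case True
      have "mul II II C = pI n (sd {..<n} C) * blade_coeff eta {..<n} (sd {..<n} C)"
        by (rule mul_I_left) fact
      then show ?thesis using True by (simp add: pI_def sc_def clif_one_def s_def)
    next
      case False
      then have "sd {..<n} C \<noteq> {..<n}" using \<open>C \<subseteq> {..<n}\<close> by blast
      then have "pI n (sd {..<n} C) = (0::'a)" unfolding pI_def by (rule if_not_P)
      then show ?thesis using False True by (simp add: mul_I_left sc_def clif_one_def)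
    qed
  qed (auto simp: mult_out sc_def clif_one_def)
qed

lemma s_sq: "s * s = 1"
proof -
  have "(\<Prod>i\<in>{..<n}. eta i) * (\<Prod>i\<in>{..<n}. eta i) = (\<Prod>i\<in>{..<n}. eta i * eta i)"
    by (simp add: prod.distrib)
  also have "\<dots> = 1"
  proof (rule prod.neutral, rule ballI)
    fix i show "eta i * eta i = 1" using eta_pm[of i] by auto
  qed
  finally have p: "(\<Prod>i\<in>{..<n}. eta i) * (\<Prod>i\<in>{..<n}. eta i) = 1" .
  have "s * s = ((-1)^ninv {..<n} {..<n} * (-1)^ninv {..<n} {..<n}) * ((\<Prod>i\<in>{..<n}. eta i) * (\<Prod>i\<in>{..<n}. eta i))"
    unfolding s_def bc_eq by (simp add: mult_ac)
  also have "\<dots> = 1" using p by (simp add: power_mult_distrib[symmetric])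
  finally show ?thesis .
qed

lemma s_ne0: "s \<noteq> 0" using s_sq by auto

lemma s_pm: "s = 1 \<or> s = -1"
proof -
  have "(s - 1) * (s + 1) = 0" using s_sq by (simp add: algebra_simps)
  then show ?thesis by (auto simp: eq_neg_iff_add_eq_0)
qed

lemma rev_I: "rv II = sc ((-1)^tri n) II"
  by (rule ext) (simp add: rev_eq pI_def sc_def)
lemma hat_I: "ht II = sc ((-1)^n) II"
  by (rule ext) (simp add: clif_hat_def pI_def sc_def)

lemma zc_sum: "zc n a b = sc a one1 + sc b II"
proof
  fix A show "zc n a b A = (sc a one1 + sc b II) A"
    using n_ne by (auto simp: zc_def sc_def clif_one_def pI_def)
qed

lemma Z_iff: "x \<in> clif_Z n \<longleftrightarrow> (\<exists>a b. x = zc n a b \<and> (even n \<longrightarrow> b = 0))"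
proof
  assume x: "x \<in> clif_Z n"
  have c: "x \<in> car" and h: "\<And>A. x A \<noteq> 0 \<Longrightarrow> A = {} \<or> (odd n \<and> A = {..<n})" using x by (auto simp: clif_Z_def)
  have "x = zc n (x {}) (x {..<n})"
  proof
    fix A show "x A = zc n (x {}) (x {..<n}) A"
      using h[of A] by (auto simp: zc_def)
  qed
  moreover have "even n \<longrightarrow> x {..<n} = 0" using h[of "{..<n}"] n_ne by auto
  ultimately show "\<exists>a b. x = zc n a b \<and> (even n \<longrightarrow> b = 0)" by blast
next
  assume "\<exists>a b. x = zc n a b \<and> (even n \<longrightarrow> b = 0)"
  then obtain a b where x: "x = zc n a b" and b: "even n \<longrightarrow> b = 0" by blast
  show "x \<in> clif_Z n" unfolding clif_Z_def x using b n_ne by (auto simp: zc_def car_iff)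
qed

lemma ZI: "even n \<longrightarrow> b = 0 \<Longrightarrow> zc n a b \<in> clif_Z n"
  using Z_iff by blast

lemma mul_zc: "x \<in> car \<Longrightarrow> mul (zc n a b) x = sc a x + sc b (mul II x)"
  by (simp add: zc_sum mult_addL mult_scL one_mult)

lemma mul_zcR: "x \<in> car \<Longrightarrow> mul x (zc n a b) = sc a x + sc b (mul x II)"
  by (simp add: zc_sum mult_addR mult_scR mult_one)

lemma zc_central: "even n \<longrightarrow> b = 0 \<Longrightarrow> x \<in> car \<Longrightarrow> mul (zc n a b) x = mul x (zc n a b)"
  by (cases "odd n") (simp_all add: mul_zc mul_zcR I_central)

lemma zc_mult: "mul (zc n a b) (zc n c d) = zc n (a * c + s * b * d) (a * d + b * c)"
proof -
  have m: "mul II (zc n c d) = sc c II + sc d (sc s one1)"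
    by (simp add: zc_sum mult_addR mult_scR I_sq mult_one)
  have "mul (zc n a b) (zc n c d) = sc a (zc n c d) + sc b (mul II (zc n c d))" by (rule mul_zc) simp
  also have "\<dots> = sc a (sc c one1 + sc d II) + sc b (sc c II + sc d (sc s one1))"
    by (simp only: m, simp only: zc_sum)
  also have "\<dots> = zc n (a * c + s * b * d) (a * d + b * c)"
    unfolding zc_sum by (simp add: fun_eq_iff sc_def algebra_simps)
  finally show ?thesis .
qed

lemma zc_hat: "ht (zc n a b) = zc n a ((-1)^n * b)"
  by (rule ext) (simp add: clif_hat_def zc_def)
lemma zc_rev: "rv (zc n a b) = zc n a ((-1)^tri n * b)"
  by (rule ext) (simp add: rev_eq zc_def)
lemma zc_add: "zc n a b + zc n c d = zc n (a + c) (b + d)"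
  by (rule ext) (simp add: zc_def)
lemma zc_diff: "zc n a b - zc n c d = zc n (a - c) (b - d)"
  by (rule ext) (simp add: zc_def)
lemma zc_sc: "sc k (zc n a b) = zc n (k * a) (k * b)"
  by (rule ext) (simp add: zc_def sc_def)
lemma zc_0: "zc n a 0 = sc a one1"
  by (rule ext) (simp add: zc_def sc_def clif_one_def)
lemma zc_00: "zc n 0 0 = 0"
  by (rule ext) (simp add: zc_def)
lemma zc_inj: "zc n a b = 0 \<Longrightarrow> a = 0 \<and> b = 0"
proof -
  assume h: "zc n a b = 0"
  have "zc n a b {} = 0" "zc n a b {..<n} = 0" using h by simp_all
  then show ?thesis using n_ne by (simp add: zc_def)
qed

definition nrm :: "'a \<Rightarrow> 'a \<Rightarrow> 'a" where "nrm a b = a * a - s * b * b"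

lemma zc_norm1: "mul (zc n a (-b)) (zc n a b) = sc (nrm a b) one1"
  by (simp add: zc_mult nrm_def zc_0[symmetric])
lemma zc_norm2: "mul (zc n a b) (zc n a (-b)) = sc (nrm a b) one1"
  by (simp add: zc_mult nrm_def zc_0[symmetric])

lemma zc_invb_nrm: "nrm a b \<noteq> 0 \<Longrightarrow> invb (zc n a b) \<and> cinv (zc n a b) = sc (1 / nrm a b) (zc n a (-b))"
proof -
  assume N: "nrm a b \<noteq> 0"
  have 1: "mul (zc n a b) (sc (1 / nrm a b) (zc n a (-b))) = one1"
    using N by (simp add: mult_scR zc_norm2 sc_sc)
  have 2: "mul (sc (1 / nrm a b) (zc n a (-b))) (zc n a b) = one1"
    using N by (simp add: mult_scL zc_norm1 sc_sc)
  have i: "invb (zc n a b)" by (rule invbI[OF _ _ 1 2]) simp_all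
  show ?thesis using i inv_unique[OF i _ 1] by simp
qed

lemma zc_invb_imp: "invb (zc n a b) \<Longrightarrow> nrm a b \<noteq> 0"
proof
  assume i: "invb (zc n a b)" and N: "nrm a b = 0"
  have "mul (zc n a (-b)) (zc n a b) = 0" using N by (simp add: zc_norm1)
  then have "zc n a (-b) = mul 0 (cinv (zc n a b))" by (rule cancelR[OF i car_zc])
  then have "zc n a (-b) = 0" by simp
  then have "a = 0 \<and> b = 0" using zc_inj by fastforce
  then have "zc n a b = 0" by (simp add: zc_00)
  then show False using i not_invb_0 by simp
qed

lemma zc_invb: "invb (zc n a b) \<longleftrightarrow> nrm a b \<noteq> 0"
  using zc_invb_imp zc_invb_nrm by blast

abbreviation Zs where "Zs \<equiv> (clif_Z n :: 'a clif set)"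
abbreviation Zu where "Zu \<equiv> clif_units n eta (clif_Z n)"

lemma Zu_iff: "z \<in> Zu \<longleftrightarrow> z \<in> Zs \<and> invb z" by (simp add: clif_units_def)

lemma Z_car: "z \<in> Zs \<Longrightarrow> z \<in> car" using Z_iff car_zc by metis

lemma Z_central: "z \<in> Zs \<Longrightarrow> x \<in> car \<Longrightarrow> mul z x = mul x z"
  using Z_iff zc_central by metis

lemma Z_mult: "z \<in> Zs \<Longrightarrow> w \<in> Zs \<Longrightarrow> mul z w \<in> Zs"
proof -
  assume "z \<in> Zs" "w \<in> Zs"
  then obtain a b c d where z: "z = zc n a b" "even n \<longrightarrow> b = 0" and w: "w = zc n c d" "even n \<longrightarrow> d = 0"
    unfolding Z_iff by blast
  show ?thesis unfolding z w zc_mult by (rule ZI) (use z w in simp)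
qed

lemma Z_rev: "z \<in> Zs \<Longrightarrow> rv z \<in> Zs"
  unfolding Z_iff using zc_rev by fastforce
lemma Z_hat: "z \<in> Zs \<Longrightarrow> ht z \<in> Zs"
  unfolding Z_iff using zc_hat by fastforce
lemma Z_add: "z \<in> Zs \<Longrightarrow> w \<in> Zs \<Longrightarrow> z + w \<in> Zs"
  unfolding Z_iff using zc_add by fastforce
lemma Z_diff: "z \<in> Zs \<Longrightarrow> w \<in> Zs \<Longrightarrow> z - w \<in> Zs"
  unfolding Z_iff using zc_diff by fastforce
lemma Z_sc: "z \<in> Zs \<Longrightarrow> sc k z \<in> Zs"
  unfolding Z_iff using zc_sc by fastforce
lemma Z_one: "one1 \<in> Zs"
proof -
  have "zc n 1 0 \<in> Zs" by (rule ZI) simp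
  then show ?thesis by (simp add: zc_0)
qed

lemma Z_cinv: "z \<in> Zu \<Longrightarrow> cinv z \<in> Zu"
proof -
  assume "z \<in> Zu"
  then obtain a b where z: "z = zc n a b" "even n \<longrightarrow> b = 0" and i: "invb z" unfolding Zu_iff Z_iff by blast
  have N: "nrm a b \<noteq> 0" using i z zc_invb by simp
  have "cinv z = sc (1 / nrm a b) (zc n a (-b))" using zc_invb_nrm[OF N] z by simp
  moreover have "zc n a (-b) \<in> Zs" by (rule ZI) (use z in simp)
  ultimately show ?thesis using Z_sc invb_cinv[OF i] Zu_iff by simp
qed

lemma Zu_mult: "z \<in> Zu \<Longrightarrow> w \<in> Zu \<Longrightarrow> mul z w \<in> Zu"
  using Z_mult invb_mult Zu_iff by blast
lemma Zu_rev: "z \<in> Zu \<Longrightarrow> rv z \<in> Zu"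
  using Z_rev invb_rev Zu_iff by blast
lemma Zu_hat: "z \<in> Zu \<Longrightarrow> ht z \<in> Zu"
  using Z_hat invb_hat Zu_iff by blast
lemma Zu_one: "one1 \<in> Zu"
  using Z_one invb_one Zu_iff by blast

end


lemma m1_fix: "(-1::'a::field_char_0)^m * c = c \<Longrightarrow> c \<noteq> 0 \<Longrightarrow> even m"
  by (auto simp: minus_one_power_iff neg_self split: if_splits)

context clif
begin

abbreviation Ps where "Ps \<equiv> clif_P n eta"
abbreviation Hs where "Hs \<equiv> clif_units n eta (clif_even n) \<union> clif_units n eta (clif_odd n)"

lemma P_iff: "T \<in> Ps \<longleftrightarrow> (\<exists>W T'. T = mul W T' \<and> W \<in> Zu \<and> T' \<in> Hs)"
  unfolding clif_P_def by blast

lemma Hs_hom: "T' \<in> Hs \<Longrightarrow> invb T' \<and> T' \<in> car \<and> (\<exists>\<sigma>. (\<sigma> = 1 \<or> \<sigma> = -1) \<and> ht T' = sc \<sigma> T')"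
proof -
  assume h: "T' \<in> Hs"
  show ?thesis
  proof (cases "T' \<in> clif_units n eta (clif_even n)")
    case True
    then have "invb T'" "T' \<in> car" "ht T' = sc 1 T'" by (auto simp: clif_units_def even_iff)
    then show ?thesis by blast
  next
    case False
    then have "T' \<in> clif_units n eta (clif_odd n)" using h by blast
    then have "invb T'" "T' \<in> car" "ht T' = sc (-1) T'" by (auto simp: clif_units_def odd_iff sc_neg)
    then show ?thesis by blast
  qed
qed

lemma P_invb: "T \<in> Ps \<Longrightarrow> invb T"
  using P_iff Hs_hom Zu_iff invb_mult by metis

lemma gen_move: "V \<in> Zs \<Longrightarrow> W \<in> Zs \<Longrightarrow> R \<in> car \<Longrightarrow> T' \<in> car \<Longrightarrow>
   mul (mul R V) (mul W T') = mul (mul V W) (mul R T')"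
proof -
  assume V: "V \<in> Zs" and W: "W \<in> Zs" and R: "R \<in> car" and T: "T' \<in> car"
  have "mul (mul R V) (mul W T') = mul (mul R (mul V W)) T'" by (simp add: mult_assoc)
  also have "mul R (mul V W) = mul (mul V W) R" using Z_central[OF Z_mult[OF V W] R] by simp
  finally show ?thesis by (simp add: mult_assoc)
qed

lemma Zu_transfer: "X \<in> Zu \<Longrightarrow> Y \<in> Zu \<Longrightarrow> U \<in> car \<Longrightarrow> mul X U \<in> Zu \<Longrightarrow> mul Y U \<in> Zu"
proof -
  assume X: "X \<in> Zu" and Y: "Y \<in> Zu" and U: "U \<in> car" and XU: "mul X U \<in> Zu"
  have iX: "invb X" using X Zu_iff by blast
  have "mul (mul Y (cinv X)) (mul X U) = mul Y (mul (mul (cinv X) X) U)" by (simp add: mult_assoc)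
  also have "\<dots> = mul Y U" using cinv[OF iX] U by (simp add: one_mult)
  finally have e: "mul (mul Y (cinv X)) (mul X U) = mul Y U" .
  have "mul Y (cinv X) \<in> Zu" by (rule Zu_mult[OF Y Z_cinv[OF X]])
  then show ?thesis using Zu_mult[OF _ XU] e by metis
qed

lemma Zu_sc: "k \<noteq> 0 \<Longrightarrow> v \<in> Zu \<Longrightarrow> sc k v \<in> Zu"
  using Z_sc invb_sc Zu_iff by blast

lemma Zu_sc_iff: "k \<noteq> 0 \<Longrightarrow> sc k v \<in> Zu \<longleftrightarrow> v \<in> Zu"
proof
  assume k: "k \<noteq> 0" and "sc k v \<in> Zu"
  then have "sc (1/k) (sc k v) \<in> Zu" using Zu_sc by simp
  then show "v \<in> Zu" using k by (simp add: sc_sc)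
qed (rule Zu_sc)

lemma P_parts: assumes T: "T \<in> Ps"
  obtains X Y U \<sigma> where "X \<in> Zu" "Y \<in> Zu" "U \<in> car" "\<sigma> = 1 \<or> \<sigma> = -1"
    "mul (rv T) T = mul X U" "mul (ht (rv T)) T = sc \<sigma> (mul Y U)"
    "invb U" "ht U = U" "rv U = U"
proof -
  obtain W T' where TW: "T = mul W T'" and W: "W \<in> Zu" and H: "T' \<in> Hs" using T P_iff by blast
  obtain \<sigma> where sg: "\<sigma> = 1 \<or> \<sigma> = -1" and hT: "ht T' = sc \<sigma> T'" and iT: "invb T'" and cT: "T' \<in> car"
    using Hs_hom[OF H] by blast
  have Wz: "W \<in> Zs" and iW: "invb W" using W Zu_iff by auto
  let ?U = "mul (rv T') T'"
  have hr: "ht (rv T') = sc \<sigma> (rv T')" using hT by (simp add: hat_rev rev_sc)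
  have 1: "mul (rv T) T = mul (mul (rv W) W) ?U"
    unfolding TW rev_mult by (rule gen_move) (use Wz cT in \<open>simp_all add: Z_rev\<close>)
  have 2: "mul (ht (rv T)) T = mul (mul (ht (rv W)) W) (mul (ht (rv T')) T')"
    unfolding TW rev_mult hat_mult by (rule gen_move) (use Wz cT in \<open>simp_all add: Z_rev Z_hat\<close>)
  also have "\<dots> = sc \<sigma> (mul (mul (ht (rv W)) W) ?U)" by (simp add: hr mult_scL mult_scR)
  finally have 2: "mul (ht (rv T)) T = sc \<sigma> (mul (mul (ht (rv W)) W) ?U)" .
  have X: "mul (rv W) W \<in> Zu" by (rule Zu_mult[OF Zu_rev[OF W] W])
  have Y: "mul (ht (rv W)) W \<in> Zu" by (rule Zu_mult[OF Zu_hat[OF Zu_rev[OF W]] W])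
  have iU: "invb ?U" by (rule invb_mult[OF invb_rev[OF iT] iT])
  have hU: "ht ?U = ?U" using sg by (auto simp: hat_mult hr hT mult_scL mult_scR sc_sc)
  have rU: "rv ?U = ?U" by (simp add: rev_mult)
  show ?thesis by (rule that[OF X Y car_mult sg 1 2 iU hU rU])
qed

lemma AP_BP_elem: "T \<in> Ps \<Longrightarrow> mul (rv T) T \<in> Zu \<longleftrightarrow> mul (ht (rv T)) T \<in> Zu"
proof -
  assume T: "T \<in> Ps"
  obtain X Y U \<sigma> where X: "X \<in> Zu" and Y: "Y \<in> Zu" and U: "U \<in> car" and sg: "\<sigma> = 1 \<or> \<sigma> = -1"
    and e1: "mul (rv T) T = mul X U" and e2: "mul (ht (rv T)) T = sc \<sigma> (mul Y U)"
    using P_parts[OF T] by metis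
  have s0: "\<sigma> \<noteq> 0" using sg by auto
  show ?thesis unfolding e1 e2 Zu_sc_iff[OF s0]
    using Zu_transfer[OF X Y U] Zu_transfer[OF Y X U] by blast
qed

lemma key_zero:
  assumes z: "z \<in> Zs" and nz: "\<not> invb z" and Y: "Y \<in> car" and X: "X = mul z Y"
    and hom: "ht X = X \<or> ht X = - X"
  shows "X = 0"
proof -
  obtain a b where zz: "z = zc n a b" and b: "even n \<longrightarrow> b = 0" using z Z_iff by blast
  have N: "nrm a b = 0" using nz zz zc_invb by simp
  have cX: "X \<in> car" using X by simp
  have "mul (zc n a (-b)) X = mul (mul (zc n a (-b)) z) Y" using X by (simp add: mult_assoc)
  also have "\<dots> = 0" using N zz by (simp add: zc_norm1)
  finally have e: "sc a X + sc (-b) (mul II X) = 0" using mul_zc[OF cX] by simp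
  show ?thesis
  proof (cases "a = 0")
    case True
    then have "s * b * b = 0" using N by (simp add: nrm_def)
    then have "b = 0" using s_ne0 by simp
    then show ?thesis using X zz True by (simp add: zc_00)
  next
    case False
    have u0: "sc a X = 0"
    proof (cases "odd n")
      case False
      then show ?thesis using e b by simp
    next
      case True
      have hI: "ht II = - II" using True by (simp add: hat_I sc_neg)
      have uv: "sc a X = sc b (mul II X)" using e
        by (simp add: fun_eq_iff sc_def)
      have hv: "ht (sc b (mul II X)) = - sc b (mul II (ht X))"
        by (simp only: hat_sc hat_mult hI mult_negL) (simp add: sc_def fun_eq_iff)
      from hom show ?thesis
      proof
        assume h: "ht X = X"
        have 1: "ht (sc a X) = sc a X" using h by (simp add: hat_sc)
        have 2: "ht (sc a X) = - sc a X" using hv h uv by simp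
        show ?thesis by (rule par_sep[OF 1 2])
      next
        assume h: "ht X = - X"
        have 1: "ht (sc a X) = - sc a X" using h by (simp only: hat_sc) (simp add: sc_def fun_eq_iff)
        have 2: "ht (sc a X) = sc a X" using hv h uv by (simp add: mult_negR sc_def fun_eq_iff)
        show ?thesis by (rule par_sep[OF 2 1])
      qed
    qed
    have "X = sc (1/a) (sc a X)" using False by (simp add: sc_sc)
    then show ?thesis using u0 by simp
  qed
qed

end


context clif
begin

lemma AB_P:
  assumes iT: "invb T" and a: "mul (rv T) T \<in> Zu" and b: "mul (ht (rv T)) T \<in> Zu"
  shows "T \<in> Ps"
proof -
  have cT: "T \<in> car" using iT invb_car by blast
  define R0 where "R0 = rv (ev T)"
  define R1 where "R1 = rv (od T)"
  have cR: "R0 \<in> car" "R1 \<in> car" using cT by (simp_all add: R0_def R1_def)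
  have hR0: "ht R0 = R0" by (simp add: R0_def hat_rev hat_ev)
  have hR1: "ht R1 = - R1" by (simp add: R1_def hat_rev hat_od rev_neg)
  have rT: "rv T = R0 + R1" unfolding R0_def R1_def rev_add[symmetric] using ev_od by metis
  have hrT: "ht (rv T) = R0 - R1" by (simp add: rT hat_add hR0 hR1)
  define g where "g = mul R0 T"
  define d where "d = mul R1 T"
  have al: "mul (rv T) T = g + d" by (simp add: g_def d_def rT mult_addL)
  have be: "mul (ht (rv T)) T = g - d" by (simp add: g_def d_def hrT mult_diffL)
  have az: "g + d \<in> Zs" "g - d \<in> Zs" using a b al be Zu_iff by auto
  have "g = sc (1/2) ((g + d) + (g - d))" by (simp add: fun_eq_iff sc_def field_simps)
  then have gZ: "g \<in> Zs" using az Z_add Z_sc by metis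
  have "d = sc (1/2) ((g + d) - (g - d))" by (simp add: fun_eq_iff sc_def field_simps)
  then have dZ: "d \<in> Zs" using az Z_diff Z_sc by metis
  have R0e: "R0 = mul g (cinv T)" by (rule cancelR[OF iT cR(1)]) (simp add: g_def)
  have R1e: "R1 = mul d (cinv T)" by (rule cancelR[OF iT cR(2)]) (simp add: d_def)
  have ciT: "cinv T \<in> car" using cinv[OF iT] by simp
  show ?thesis
  proof (cases "invb g")
    case True
    have iR: "invb R0" unfolding R0e by (rule invb_mult[OF True invb_cinv[OF iT]])
    have "T = mul (cinv R0) g" by (rule cancelL[OF iR cT]) (simp add: g_def)
    also have "\<dots> = mul g (cinv R0)" using Z_central[OF gZ] cinv[OF iR] by simp
    finally have Te: "T = mul g (cinv R0)" .
    have "R0 \<in> clif_even n" using cR hR0 even_iff by blast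
    then have "cinv R0 \<in> clif_units n eta (clif_even n)"
      using even_cinv[OF iR] invb_cinv[OF iR] by (simp add: clif_units_def)
    moreover have "g \<in> Zu" using gZ True Zu_iff by blast
    ultimately show ?thesis using Te P_iff by blast
  next
    case ng: False
    show ?thesis
    proof (cases "invb d")
      case True
      have iR: "invb R1" unfolding R1e by (rule invb_mult[OF True invb_cinv[OF iT]])
      have "T = mul (cinv R1) d" by (rule cancelL[OF iR cT]) (simp add: d_def)
      also have "\<dots> = mul d (cinv R1)" using Z_central[OF dZ] cinv[OF iR] by simp
      finally have Te: "T = mul d (cinv R1)" .
      have "R1 \<in> clif_odd n" using cR hR1 odd_iff by blast
      then have "cinv R1 \<in> clif_units n eta (clif_odd n)"
        using odd_cinv[OF iR] invb_cinv[OF iR] by (simp add: clif_units_def)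
      moreover have "d \<in> Zu" using dZ True Zu_iff by blast
      ultimately show ?thesis using Te P_iff by blast
    next
      case False
      have "R0 = 0" by (rule key_zero[OF gZ ng ciT R0e]) (simp add: hR0)
      moreover have "R1 = 0" by (rule key_zero[OF dZ False ciT R1e]) (simp add: hR1)
      ultimately have "mul (rv T) T = 0" by (simp add: rT)
      then show ?thesis using a Zu_iff not_invb_0 by simp
    qed
  qed
qed

lemma Z_small:
  assumes n3: "n \<le> 3" and U: "U \<in> car" and h: "ht U = U" and r: "rv U = U"
  shows "U \<in> Zs"
  unfolding clif_Z_def
proof (intro CollectI conjI allI impI U)
  fix A assume nz: "U A \<noteq> 0"
  have sub: "A \<subseteq> {..<n}" using U nz car_iff by blast
  have fin: "finite A" using sub by (rule fin_sub)
  have cA: "card A \<le> 3" using card_mono[OF _ sub] n3 by simp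
  have "(-1)^card A * U A = U A" using fun_cong[OF h, of A] by (simp add: clif_hat_def)
  then have e1: "even (card A)" using nz by (rule m1_fix)
  have "(-1)^tri (card A) * U A = U A" using fun_cong[OF r, of A] by (simp add: rev_eq)
  then have e2: "even (tri (card A))" using nz by (rule m1_fix)
  have "card A = 0 \<or> card A = 1 \<or> card A = 2 \<or> card A = 3" using cA by arith
  then have "card A = 0" using e1 e2 by (auto simp: tri_def)
  then show "A = {} \<or> odd n \<and> A = {..<n}" using fin by simp
qed

lemma QP_small: "n \<le> 3 \<Longrightarrow> T \<in> Ps \<Longrightarrow> mul (rv T) T \<in> Zu"
proof -
  assume n3: "n \<le> 3" and T: "T \<in> Ps"
  obtain X Y U \<sigma> where X: "X \<in> Zu" and U: "U \<in> car" and e1: "mul (rv T) T = mul X U"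
    and iU: "invb U" and hU: "ht U = U" and rU: "rv U = U"
    using P_parts[OF T] by metis
  have "U \<in> Zu" using Z_small[OF n3 U hU rU] iU Zu_iff by blast
  then show ?thesis using Zu_mult[OF X] e1 by simp
qed

lemma n4_example:
  assumes n4: "n = 4"
  shows "\<exists>T. T \<in> Ps \<and> mul (rv T) T \<notin> Zs"
proof -
  define T where "T = one1 + sc 2 II"
  have cT: "T \<in> car" by (simp add: T_def)
  have mIo: "mul II one1 = II" "mul one1 II = II" by (simp_all add: one_mult mult_one)
  have mIT: "mul II T = II + sc 2 (sc s one1)"
    by (simp add: T_def mult_addR mult_scR mIo I_sq)
  have mTI: "mul T II = II + sc 2 (sc s one1)"
    by (simp add: T_def mult_addL mult_scL mIo I_sq)
  have rT: "rv T = T" by (simp add: T_def rev_add rev_sc rev_I) (simp add: n4 tri_def)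
  have hT: "ht T = T" by (simp add: T_def hat_add hat_sc hat_I) (simp add: n4)
  have TT: "mul T T = one1 + sc 2 II + sc 2 (II + sc 2 (sc s one1))"
  proof -
    have TT0: "mul (one1 + sc 2 II) T = T + sc 2 (mul II T)" by (simp add: mult_addL mult_scL one_mult cT)
    then show ?thesis unfolding mIT by (simp only: T_def[symmetric])
  qed
  have n1: "one1 {..<n} = (0::'a)" using n_ne by (simp add: clif_one_def)
  have TTv: "mul T T {..<n} = 4"
    unfolding TT using n1 by (simp add: sc_def pI_def)
  have notZ: "mul (rv T) T \<notin> Zs"
  proof
    assume "mul (rv T) T \<in> Zs"
    then have "mul T T \<in> Zs" using rT by simp
    then have "mul T T {..<n} = 0" using n_ne n4 by (auto simp: clif_Z_def)
    then show False using TTv by simp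
  qed
  define k where "k = 1 - 4 * s"
  have k0: "k \<noteq> 0" using s_pm by (auto simp: k_def)
  define S where "S = sc (1/k) (one1 - sc 2 II)"
  have cS: "S \<in> car" by (simp add: S_def)
  have 1: "mul T S = one1"
  proof -
    have "mul T S = sc (1/k) (T - sc 2 (II + sc 2 (sc s one1)))"
      by (simp add: S_def mult_scR mult_diffR mult_one cT mTI)
    also have "\<dots> = one1" using k0 by (simp add: T_def k_def fun_eq_iff sc_def field_simps)
    finally show ?thesis .
  qed
  have 2: "mul S T = one1"
  proof -
    have "mul S T = sc (1/k) (T - sc 2 (II + sc 2 (sc s one1)))"
      by (simp add: S_def mult_scL mult_diffL one_mult cT mIT)
    also have "\<dots> = one1" using k0 by (simp add: T_def k_def fun_eq_iff sc_def field_simps)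
    finally show ?thesis .
  qed
  have iT: "invb T" by (rule invbI[OF cT cS 1 2])
  have "T \<in> clif_units n eta (clif_even n)" using iT cT hT by (simp add: clif_units_def even_iff)
  then have "mul one1 T \<in> Ps" using Zu_one P_iff by blast
  then have "T \<in> Ps" using cT by (simp add: one_mult)
  then show ?thesis using notZ by blast
qed

abbreviation Qs where "Qs \<equiv> clif_Q n eta"
abbreviation As where "As \<equiv> clif_A n eta"
abbreviation Bs where "Bs \<equiv> clif_B n eta"

lemma As_iff: "T \<in> As \<longleftrightarrow> invb T \<and> mul (rv T) T \<in> Zu"
  unfolding clif_A_def clif_units_def using invb_car by blast
lemma Bs_iff: "T \<in> Bs \<longleftrightarrow> invb T \<and> mul (ht (rv T)) T \<in> Zu"
  unfolding clif_B_def clif_units_def using invb_car by blast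
lemma Qs_iff: "T \<in> Qs \<longleftrightarrow> T \<in> Ps \<and> mul (rv T) T \<in> Zu"
  unfolding clif_Q_def by blast

lemma main_eqs:
  "Qs = As \<inter> Ps \<and> As \<inter> Ps = Bs \<inter> Ps \<and> Bs \<inter> Ps = As \<inter> Bs \<and>
   (n \<le> 3 \<longrightarrow> Qs = Ps) \<and> (n = 4 \<longrightarrow> Qs \<noteq> Ps \<and> As \<noteq> Ps)"
proof (intro conjI impI)
  show "Qs = As \<inter> Ps" using Qs_iff As_iff P_invb by blast
  show "As \<inter> Ps = Bs \<inter> Ps" using As_iff Bs_iff P_invb AP_BP_elem by blast
  show "Bs \<inter> Ps = As \<inter> Bs" using As_iff Bs_iff P_invb AP_BP_elem AB_P by blast
  show "n \<le> 3 \<Longrightarrow> Qs = Ps" using Qs_iff QP_small by blast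
  assume n4: "n = 4"
  obtain T where T: "T \<in> Ps" "mul (rv T) T \<notin> Zs" using n4_example[OF n4] by blast
  have "T \<notin> Qs" using T Qs_iff Zu_iff by blast
  then show "Qs \<noteq> Ps" using T by blast
  have "T \<notin> As" using T As_iff Zu_iff by blast
  then show "As \<noteq> Ps" using T by blast
qed

end

theorem mainTheorem9:
  fixes n :: nat
  assumes "n \<ge> 2"
  shows
   "(\<forall>p q. p + q = n \<longrightarrow>
      clif_Q n (real_sig p) = clif_A n (real_sig p) \<inter> clif_P n (real_sig p) \<and>
      clif_A n (real_sig p) \<inter> clif_P n (real_sig p) = clif_B n (real_sig p) \<inter> clif_P n (real_sig p) \<and>
      clif_B n (real_sig p) \<inter> clif_P n (real_sig p) = clif_A n (real_sig p) \<inter> clif_B n (real_sig p) \<and>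
      (n \<le> 3 \<longrightarrow> clif_Q n (real_sig p) = clif_P n (real_sig p)) \<and>
      (n = 4 \<longrightarrow> clif_Q n (real_sig p) \<noteq> clif_P n (real_sig p) \<and>
                 clif_A n (real_sig p) \<noteq> clif_P n (real_sig p)))
    \<and>
    (let eta = (\<lambda>_. 1 :: complex) in
      clif_Q n eta = clif_A n eta \<inter> clif_P n eta \<and>
      clif_A n eta \<inter> clif_P n eta = clif_B n eta \<inter> clif_P n eta \<and>
      clif_B n eta \<inter> clif_P n eta = clif_A n eta \<inter> clif_B n eta \<and>
      (n \<le> 3 \<longrightarrow> clif_Q n eta = clif_P n eta) \<and>
      (n = 4 \<longrightarrow> clif_Q n eta \<noteq> clif_P n eta \<and> clif_A n eta \<noteq> clif_P n eta))"
proof -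
  have n1: "1 \<le> n" using assms by simp
  have R: "\<And>p. clif n (real_sig p)"
  proof
    fix p i show "real_sig p i = 1 \<or> real_sig p i = -1" by (simp add: real_sig_def)
  qed (rule n1)
  have C: "clif n (\<lambda>_. 1 :: complex)"
  proof
    fix i show "(1::complex) = 1 \<or> (1::complex) = -1" by simp
  qed (rule n1)
  show ?thesis unfolding Let_def
  proof (rule conjI)
    show "\<forall>p q. p + q = n \<longrightarrow>
      clif_Q n (real_sig p) = clif_A n (real_sig p) \<inter> clif_P n (real_sig p) \<and>
      clif_A n (real_sig p) \<inter> clif_P n (real_sig p) = clif_B n (real_sig p) \<inter> clif_P n (real_sig p) \<and>
      clif_B n (real_sig p) \<inter> clif_P n (real_sig p) = clif_A n (real_sig p) \<inter> clif_B n (real_sig p) \<and>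
      (n \<le> 3 \<longrightarrow> clif_Q n (real_sig p) = clif_P n (real_sig p)) \<and>
      (n = 4 \<longrightarrow> clif_Q n (real_sig p) \<noteq> clif_P n (real_sig p) \<and>
                 clif_A n (real_sig p) \<noteq> clif_P n (real_sig p))"
    proof (intro allI impI)
      fix p q :: nat
      show "clif_Q n (real_sig p) = clif_A n (real_sig p) \<inter> clif_P n (real_sig p) \<and>
      clif_A n (real_sig p) \<inter> clif_P n (real_sig p) = clif_B n (real_sig p) \<inter> clif_P n (real_sig p) \<and>
      clif_B n (real_sig p) \<inter> clif_P n (real_sig p) = clif_A n (real_sig p) \<inter> clif_B n (real_sig p) \<and>
      (n \<le> 3 \<longrightarrow> clif_Q n (real_sig p) = clif_P n (real_sig p)) \<and>
      (n = 4 \<longrightarrow> clif_Q n (real_sig p) \<noteq> clif_P n (real_sig p) \<and>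
                 clif_A n (real_sig p) \<noteq> clif_P n (real_sig p))"
        by (rule clif.main_eqs[OF R])
    qed
  next
    show "clif_Q n (\<lambda>_. 1 :: complex) = clif_A n (\<lambda>_. 1) \<inter> clif_P n (\<lambda>_. 1) \<and>
      clif_A n (\<lambda>_. 1 :: complex) \<inter> clif_P n (\<lambda>_. 1) = clif_B n (\<lambda>_. 1) \<inter> clif_P n (\<lambda>_. 1) \<and>
      clif_B n (\<lambda>_. 1 :: complex) \<inter> clif_P n (\<lambda>_. 1) = clif_A n (\<lambda>_. 1) \<inter> clif_B n (\<lambda>_. 1) \<and>
      (n \<le> 3 \<longrightarrow> clif_Q n (\<lambda>_. 1 :: complex) = clif_P n (\<lambda>_. 1)) \<and>
      (n = 4 \<longrightarrow> clif_Q n (\<lambda>_. 1 :: complex) \<noteq> clif_P n (\<lambda>_. 1) \<and> clif_A n (\<lambda>_. 1 :: complex) \<noteq> clif_P n (\<lambda>_. 1))"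
      by (rule clif.main_eqs[OF C])
  qed
qed

end
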